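(* Let $X=\{a,b,c\}$, $S=X^*$, and let $\mathcal{L}\subseteq 2^{X^*}$ be a nontrivial language family which is closed under finite unions, under left markers ($wL\in\mathcal{L}$ for $w\in X^*$, $L\in\mathcal{L}$), under left quotients by words ($w^{-1}L=\{v\in X^*: wv\in L\}\in\mathcal{L}$ for $w\in X^*$, $L\in\mathcal{L}$), and under regular variation ($L\cup R\in\mathcal{L}$ and $L\cap R\in\mathcal{L}$ for all $L\in\mathcal{L}$ and regular $R\subseteq X^*$). Let $A\subseteq X^*$ with $A\notin\mathcal{L}$ or $X^*\setminus A\notin\mathcal{L}$, and put $A_{xy}=xA\cup y(X^*\setminus A)$ for $x,y\in X$ and $\mathbf{C}(A)=(A_{ab},A_{bc},A_{ca})$. Then $\mathbf{C}(A)\notin\mathit{class}_3(\mathcal{L})$, and for every classification problem $\mathbf{B}\le\mathbf{C}(A)$ with $|\mathbf{B}|=3$ we have $\mathbf{B}\notin\mathit{core}_3(\mathcal{L})$.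
   Context: $\mathcal{L}$ is nontrivial if $\emptyset,X^*\in\mathcal{L}$ and for all $Q\in\mathcal{L}$ and finite $E\subseteq X^*$ both $Q\cup E\in\mathcal{L}$ and $Q\setminus E\in\mathcal{L}$. A classification problem is a vector $(A_1,\dots,A_k)$, $k\ge1$, of pairwise disjoint infinite subsets of $X^*$, of length $k$. For vectors $\mathbf{B}=(B_1,\dots,B_m)$, $\mathbf{Q}=(Q_1,\dots,Q_k)$, $\mathbf{B}\le\mathbf{Q}$ means $1\le m\le k$ and there is an injective $\sigma:\{1,\dots,m\}\to\{1,\dots,k\}$ with $B_i\subseteq Q_{\sigma(i)}$. An $\mathcal{L}$-partition is a vector of pairwise disjoint members of $\mathcal{L}$ whose union is $X^*$. $\mathit{class}_k(\mathcal{L})$: classification problems $\mathbf{A}$ of length $k$ with $\mathbf{A}\le\mathbf{Q}$ for some $\mathcal{L}$-partition $\mathbf{Q}$ of length $k$. For $k>1$, $\mathit{core}_k(\mathcal{L})$ is the set of classification problems $\mathbf{A}$ of length $k$ such that every classification problem $\mathbf{A}'\le\mathbf{A}$ with $|\mathbf{A}'|>1$ satisfies $\mathbf{A}'\notin\mathit{class}_{|\mathbf{A}'|}(\mathcal{L})$. *)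

theory Defs
  imports Main
begin

text \<open>The alphabet X = {a,b,c}; words are lists, X* is UNIV :: sym list set.\<close>
datatype sym = a | b | c

type_synonym lang = "sym list set"

definition lconc :: "lang \<Rightarrow> lang \<Rightarrow> lang" where
  "lconc A B = {u @ v | u v. u \<in> A \<and> v \<in> B}"

definition lstar :: "lang \<Rightarrow> lang" where
  "lstar A = {concat ws | ws. set ws \<subseteq> A}"

inductive regular :: "lang \<Rightarrow> bool" where
  reg_empty: "regular {}"
| reg_eps: "regular {[]}"
| reg_sym: "regular {[x]}"
| reg_union: "regular A \<Longrightarrow> regular B \<Longrightarrow> regular (A \<union> B)"
| reg_conc: "regular A \<Longrightarrow> regular B \<Longrightarrow> regular (lconc A B)"
| reg_star: "regular A \<Longrightarrow> regular (lstar A)"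

definition nontrivial :: "lang set \<Rightarrow> bool" where
  "nontrivial \<L> \<longleftrightarrow> {} \<in> \<L> \<and> UNIV \<in> \<L> \<and>
     (\<forall>Q\<in>\<L>. \<forall>E. finite E \<longrightarrow> Q \<union> E \<in> \<L> \<and> Q - E \<in> \<L>)"

text \<open>Vectors (A_1,...,A_k) are lists of languages; the length is the list length.\<close>
definition classification_problem :: "lang list \<Rightarrow> bool" where
  "classification_problem As \<longleftrightarrow> length As \<ge> 1 \<and>
     (\<forall>i<length As. infinite (As ! i)) \<and>
     (\<forall>i<length As. \<forall>j<length As. i \<noteq> j \<longrightarrow> As ! i \<inter> As ! j = {})"

definition vle :: "lang list \<Rightarrow> lang list \<Rightarrow> bool" where
  "vle Bs Qs \<longleftrightarrow> 1 \<le> length Bs \<and> length Bs \<le> length Qs \<and>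
     (\<exists>\<sigma>. inj_on \<sigma> {..<length Bs} \<and> \<sigma> ` {..<length Bs} \<subseteq> {..<length Qs} \<and>
          (\<forall>i<length Bs. Bs ! i \<subseteq> Qs ! (\<sigma> i)))"

definition L_partition :: "lang set \<Rightarrow> lang list \<Rightarrow> bool" where
  "L_partition \<L> Qs \<longleftrightarrow> (\<forall>i<length Qs. Qs ! i \<in> \<L>) \<and>
     (\<forall>i<length Qs. \<forall>j<length Qs. i \<noteq> j \<longrightarrow> Qs ! i \<inter> Qs ! j = {}) \<and>
     \<Union>(set Qs) = UNIV"

definition classk :: "nat \<Rightarrow> lang set \<Rightarrow> lang list set" where
  "classk k \<L> = {As. classification_problem As \<and> length As = k \<and>
     (\<exists>Qs. L_partition \<L> Qs \<and> length Qs = k \<and> vle As Qs)}"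

definition core :: "nat \<Rightarrow> lang set \<Rightarrow> lang list set" where
  "core k \<L> = {As. classification_problem As \<and> length As = k \<and>
     (\<forall>A'. classification_problem A' \<and> vle A' As \<and> length A' > 1 \<longrightarrow>
        A' \<notin> classk (length A') \<L>)}"

definition Axy :: "sym \<Rightarrow> sym \<Rightarrow> lang \<Rightarrow> lang" where
  "Axy x y A = (\<lambda>v. x # v) ` A \<union> (\<lambda>v. y # v) ` (- A)"

definition CA :: "lang \<Rightarrow> lang list" where
  "CA A = [Axy a b A, Axy b c A, Axy c a A]"

end

theory Submission
  imports Defs
begin

lemma all_sym: "y = a \<or> y = b \<or> y = c" by (cases y) auto

definition pre :: "sym \<Rightarrow> lang" where "pre x = {v. \<exists>u. v = x # u}"

lemma reg_univ: "regular (UNIV :: lang)"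
proof -
  have "UNIV = lstar ({[a]} \<union> {[b]} \<union> {[c]})"
  proof -
    have "w \<in> lstar ({[a]} \<union> {[b]} \<union> {[c]})" for w
      unfolding lstar_def
      by (rule CollectI, rule exI[of _ "map (\<lambda>x. [x]) w"]) (auto, metis all_sym)
    then show ?thesis by auto
  qed
  then show ?thesis by (metis reg_star reg_union reg_sym)
qed

lemma reg_pre: "regular (pre x)"
proof -
  have "pre x = lconc {[x]} UNIV" by (auto simp: pre_def lconc_def)
  then show ?thesis by (simp add: reg_conc reg_sym reg_univ)
qed

lemma reg_npre: "regular (- pre x)"
proof -
  have "- pre x = (case x of a \<Rightarrow> {[]} \<union> pre b \<union> pre c
      | b \<Rightarrow> {[]} \<union> pre a \<union> pre c | c \<Rightarrow> {[]} \<union> pre a \<union> pre b)"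
    by (cases x) (auto simp: pre_def neq_Nil_conv, (metis all_sym)+)
  moreover have r: "regular ({[]} \<union> (pre y \<union> pre z))" for y z by (intro reg_union reg_eps reg_pre)
  ultimately show ?thesis by (cases x) (use r in auto)
qed

lemma inf_letter:
  assumes "infinite (B :: lang)" shows "\<exists>l. infinite (B \<inter> pre l)"
proof (rule ccontr)
  assume "\<not> ?thesis"
  then have f: "finite (B \<inter> pre l)" for l by auto
  have "B \<subseteq> {[]} \<union> (B \<inter> pre a) \<union> (B \<inter> pre b) \<union> (B \<inter> pre c)"
    by (auto simp: pre_def neq_Nil_conv, metis all_sym)
  then have "finite B" using f by (meson finite.emptyI finite.insertI finite_UnI finite_subset)
  then show False using assms by simp
qed

lemma CA_letter:
  assumes "k < 3" "CA A ! k \<inter> pre l \<noteq> {}"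
  shows "(k=0 \<and> l\<noteq>c) \<or> (k=1 \<and> l\<noteq>a) \<or> (k=2 \<and> l\<noteq>b)"
proof -
  have "k = 0 \<or> k = 1 \<or> k = 2" using assms(1) by auto
  then show ?thesis using assms(2)
    by (auto simp: CA_def Axy_def pre_def)
qed

theorem theorem3p6:
  fixes \<L> :: "lang set" and A :: lang
  assumes "nontrivial \<L>"
    and "\<And>L1 L2. L1 \<in> \<L> \<Longrightarrow> L2 \<in> \<L> \<Longrightarrow> L1 \<union> L2 \<in> \<L>"
    and "\<And>w L. L \<in> \<L> \<Longrightarrow> (\<lambda>v. w @ v) ` L \<in> \<L>"
    and "\<And>w L. L \<in> \<L> \<Longrightarrow> {v. w @ v \<in> L} \<in> \<L>"
    and "\<And>L R. L \<in> \<L> \<Longrightarrow> regular R \<Longrightarrow> L \<union> R \<in> \<L> \<and> L \<inter> R \<in> \<L>"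
    and "A \<notin> \<L> \<or> - A \<notin> \<L>"
  shows "CA A \<notin> classk 3 \<L> \<and>
    (\<forall>Bs. classification_problem Bs \<and> vle Bs (CA A) \<and> length Bs = 3 \<longrightarrow> Bs \<notin> core 3 \<L>)"
proof
  show "CA A \<notin> classk 3 \<L>"
  proof
    assume "CA A \<in> classk 3 \<L>"
    then obtain Qs where P: "L_partition \<L> Qs" "length Qs = 3" "vle (CA A) Qs"
      by (auto simp: classk_def)
    have l3: "length (CA A) = 3" by (simp add: CA_def)
    obtain \<sigma> where s: "inj_on \<sigma> {..<3}" "\<sigma> ` {..<3} \<subseteq> {..<3}"
      "\<forall>i<3. CA A ! i \<subseteq> Qs ! (\<sigma> i)"
      using P(3) unfolding vle_def l3 P(2) by (elim conjE exE) blast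
    define P1 where "P1 = Qs ! (\<sigma> 0)"
    define P3 where "P3 = Qs ! (\<sigma> 2)"
    have ne: "\<sigma> 0 \<noteq> \<sigma> 2" using inj_on_eq_iff[OF s(1), of 0 2] by simp
    have lt: "\<sigma> 0 < 3" "\<sigma> 2 < 3" using s(2) unfolding image_subset_iff by simp_all
    have dis: "P1 \<inter> P3 = {}" using P(1) P(2) ne lt by (auto simp: L_partition_def P1_def P3_def)
    have in1: "P1 \<in> \<L>" "P3 \<in> \<L>" using P(1) P(2) lt by (auto simp: L_partition_def P1_def P3_def)
    have sub1: "Axy a b A \<subseteq> P1" using s(3)[rule_format, of 0] by (auto simp: P1_def CA_def)
    have sub3: "Axy c a A \<subseteq> P3" using s(3)[rule_format, of 2] by (auto simp: P3_def CA_def)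
    have e1: "{v. [a] @ v \<in> P1} = A"
    proof
      show "A \<subseteq> {v. [a] @ v \<in> P1}" using sub1 by (auto simp: Axy_def)
      show "{v. [a] @ v \<in> P1} \<subseteq> A"
      proof
        fix v assume "v \<in> {v. [a] @ v \<in> P1}"
        moreover have "v \<notin> A \<Longrightarrow> a # v \<in> P3" using sub3 by (auto simp: Axy_def)
        ultimately show "v \<in> A" using dis by auto
      qed
    qed
    have e3: "{v. [a] @ v \<in> P3} = - A"
    proof
      show "- A \<subseteq> {v. [a] @ v \<in> P3}" using sub3 by (auto simp: Axy_def)
      show "{v. [a] @ v \<in> P3} \<subseteq> - A"
      proof
        fix v assume "v \<in> {v. [a] @ v \<in> P3}"
        moreover have "v \<in> A \<Longrightarrow> a # v \<in> P1" using sub1 by (auto simp: Axy_def)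
        ultimately show "v \<in> - A" using dis by auto
      qed
    qed
    show False using assms(4)[OF in1(1), of "[a]"] assms(4)[OF in1(2), of "[a]"] e1 e3 assms(6)
      by simp
  qed
next
  have regL: "R \<in> \<L>" if "regular R" for R
    using assms(5)[OF _ that, of "{}"] assms(1) by (auto simp: nontrivial_def)
  show "\<forall>Bs. classification_problem Bs \<and> vle Bs (CA A) \<and> length Bs = 3 \<longrightarrow> Bs \<notin> core 3 \<L>"
  proof (intro allI impI)
    fix Bs assume H: "classification_problem Bs \<and> vle Bs (CA A) \<and> length Bs = 3"
    then have cp: "classification_problem Bs" and len: "length Bs = 3" and v: "vle Bs (CA A)" by auto
    have l3: "length (CA A) = 3" by (simp add: CA_def)
    obtain \<sigma> where s: "inj_on \<sigma> {..<3}" "\<sigma> ` {..<3} \<subseteq> {..<3}"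
      "\<forall>i<3. Bs ! i \<subseteq> CA A ! (\<sigma> i)"
      using v unfolding vle_def l3 len by (elim conjE exE) blast
    have infB: "infinite (Bs ! i)" if "i < 3" for i using cp len that by (auto simp: classification_problem_def)
    obtain ll where ll: "\<And>i. i < 3 \<Longrightarrow> infinite (Bs ! i \<inter> pre (ll i))"
      using inf_letter[OF infB] by metis
    have let_ok: "(\<sigma> i=0 \<and> ll i\<noteq>c) \<or> (\<sigma> i=1 \<and> ll i\<noteq>a) \<or> (\<sigma> i=2 \<and> ll i\<noteq>b)" if "i<3" for i
    proof (rule CA_letter)
      show "\<sigma> i < 3" using s(2) that unfolding image_subset_iff by simp
      have "Bs ! i \<inter> pre (ll i) \<noteq> {}" using ll[OF that] by (metis finite.emptyI)
      then show "CA A ! \<sigma> i \<inter> pre (ll i) \<noteq> {}" using s(3) that by blast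
    qed
    have "\<exists>i j. i < 3 \<and> j < 3 \<and> ll i \<noteq> ll j"
    proof (rule ccontr)
      assume "\<not> ?thesis"
      then have eq: "ll 1 = ll 0" "ll 2 = ll 0" by auto
      have d: "\<sigma> 0 \<noteq> \<sigma> 1" "\<sigma> 0 \<noteq> \<sigma> 2" "\<sigma> 1 \<noteq> \<sigma> 2" using inj_on_eq_iff[OF s(1), of 0 2] inj_on_eq_iff[OF s(1), of 0 1] inj_on_eq_iff[OF s(1), of 1 2] by simp_all
      show False using let_ok[of 0] let_ok[of 1] let_ok[of 2] eq d
        by (cases "ll 0") auto
    qed
    then obtain i j where ij: "i < 3" "j < 3" "ll i \<noteq> ll j" by blast
    then have ij': "i \<noteq> j" by auto
    define A' where "A' = [Bs ! i \<inter> pre (ll i), Bs ! j \<inter> pre (ll j)]"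
    have predis: "pre (ll i) \<inter> pre (ll j) = {}" using ij(3) by (auto simp: pre_def)
    have cpA: "classification_problem A'"
      unfolding classification_problem_def A'_def
      using ll[OF ij(1)] ll[OF ij(2)] predis by (auto simp: less_Suc_eq nth_Cons')
    have vA: "vle A' Bs"
      unfolding vle_def A'_def using len ij ij'
      by (intro conjI exI[of _ "\<lambda>k. if k = 0 then i else j"]) (auto simp: inj_on_def less_Suc_eq)
    have clA: "A' \<in> classk 2 \<L>"
    proof -
      define Qs where "Qs = [pre (ll i), - pre (ll i)]"
      have "L_partition \<L> Qs" unfolding L_partition_def Qs_def
        using regL[OF reg_pre] regL[OF reg_npre] by (auto simp: less_Suc_eq nth_Cons')
      moreover have "vle A' Qs" unfolding vle_def A'_def Qs_def using predis
        by (intro conjI exI[of _ "\<lambda>k. k"]) (auto simp: less_Suc_eq)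
      ultimately show ?thesis using cpA by (auto simp: classk_def A'_def Qs_def)
    qed
    have "length A' = 2" by (simp add: A'_def)
    show "Bs \<notin> core 3 \<L>"
      unfolding core_def using cpA vA clA \<open>length A' = 2\<close> by (metis (no_types, lifting) mem_Collect_eq one_less_numeral_iff semiring_norm(76))
  qed
qed

end
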